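(* Every implicational formula is classically equivalent (i.e. has the same truth value under every Boolean valuation) to an implicational formula of order at most three.
   Context: Implicational formulas are built from propositional variables using $\to$ only. Order: an atom has order $0$, and $r(\sigma\to\tau)=\max(r(\tau),r(\sigma)+1)$. *)

theory Defs
  imports Main
begin

datatype 'a ifm = Var 'a | Imp "'a ifm" "'a ifm"

fun ord :: "'a ifm \<Rightarrow> nat" where
  "ord (Var p) = 0"
| "ord (Imp s t) = max (ord t) (ord s + 1)"

fun eval :: "('a \<Rightarrow> bool) \<Rightarrow> 'a ifm \<Rightarrow> bool" where
  "eval v (Var p) = v p"
| "eval v (Imp s t) = (eval v s \<longrightarrow> eval v t)"

end

theory Submission
  imports Defs
begin

fun vars :: "'a ifm \<Rightarrow> 'a list" where
  "vars (Var p) = [p]"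
| "vars (Imp s t) = vars s @ vars t"

fun concl :: "'a ifm \<Rightarrow> 'a" where
  "concl (Var p) = p"
| "concl (Imp s t) = concl t"

lemma concl_true: "v (concl f) \<Longrightarrow> eval v f"
  by (induction f) auto

lemma eval_agree: "(\<forall>p\<in>set (vars f). v p = w p) \<Longrightarrow> eval v f = eval w f"
  by (induction f) auto

lemma eval_foldr: "eval v (foldr Imp hs c) = ((\<forall>h\<in>set hs. eval v h) \<longrightarrow> eval v c)"
  by (induction hs) auto

lemma ord_foldr: "(\<forall>h\<in>set hs. ord h + 1 \<le> n) \<Longrightarrow> ord c \<le> n \<Longrightarrow> ord (foldr Imp hs c) \<le> n"
  by (induction hs) auto

definition X :: "'a list \<Rightarrow> 'a \<Rightarrow> 'a list \<Rightarrow> 'a ifm" where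
  "X xs q ys = foldr Imp (map (\<lambda>p. if p \<in> set ys then Var p else Imp (Var p) (Var q)) xs) (Var q)"

lemma ord_X: "ord (X xs q ys) \<le> 2"
  unfolding X_def by (rule ord_foldr) auto

lemma eval_X_aux: "eval v (foldr Imp (map (\<lambda>p. if p \<in> set ys then Var p else Imp (Var p) (Var q)) xs) (Var q))
   = (v q \<or> \<not> (\<forall>p\<in>set xs. v p = (p \<in> set ys)))"
  by (induction xs) auto

lemma eval_X: "(\<not> eval v (X xs q ys)) = (\<not> v q \<and> (\<forall>p\<in>set xs. v p = (p \<in> set ys)))"
  unfolding X_def eval_X_aux by auto

theorem proposition4p3:
  fixes \<phi> :: "'a ifm"
  shows "\<exists>\<psi> :: 'a ifm. ord \<psi> \<le> 3 \<and> (\<forall>v. eval v \<psi> = eval v \<phi>)"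
proof -
  define xs where "xs = vars \<phi>"
  define q where "q = concl \<phi>"
  define W where "W = filter (\<lambda>ys. eval (\<lambda>p. p \<in> set ys) \<phi>) (subseqs xs)"
  define \<psi> where "\<psi> = foldr Imp (map (X xs q) W) (Var q)"
  have "ord \<psi> \<le> 3" unfolding \<psi>_def
  proof (rule ord_foldr)
    show "\<forall>h\<in>set (map (X xs q) W). ord h + 1 \<le> 3"
    proof
      fix h assume "h \<in> set (map (X xs q) W)"
      then obtain ys where "h = X xs q ys" by auto
      then have "ord h \<le> 2" using ord_X by simp
      then show "ord h + 1 \<le> 3" by linarith
    qed
  qed simp
  moreover have "eval v \<psi> = eval v \<phi>" for v
  proof
    assume h: "eval v \<psi>"
    show "eval v \<phi>"
    proof (cases "v q")
      case True then show ?thesis using concl_true[of v \<phi>] q_def by simp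
    next
      case False
      with h obtain ys where ys: "ys \<in> set W" "\<not> eval v (X xs q ys)"
        unfolding \<psi>_def eval_foldr by auto
      then have "\<forall>p\<in>set xs. v p = (p \<in> set ys)" using eval_X[of v xs q ys] by simp
      then have "eval v \<phi> = eval (\<lambda>p. p \<in> set ys) \<phi>"
        using eval_agree[of \<phi> v "\<lambda>p. p \<in> set ys"] xs_def by simp
      then show ?thesis using ys(1) W_def by auto
    qed
  next
    assume h: "eval v \<phi>"
    show "eval v \<psi>"
    proof (cases "v q")
      case True then show ?thesis unfolding \<psi>_def eval_foldr by simp
    next
      case False
      have "{p\<in>set xs. v p} \<in> set ` set (subseqs xs)" by (rule subset_subseqs) auto
      then obtain ys where ys: "ys \<in> set (subseqs xs)" "set ys = {p\<in>set xs. v p}"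
        by (rule imageE) simp
      have ag: "\<forall>p\<in>set xs. v p = (p \<in> set ys)" using ys(2) by auto
      then have "eval (\<lambda>p. p \<in> set ys) \<phi>" using h eval_agree[of \<phi> v "\<lambda>p. p \<in> set ys"] unfolding xs_def by blast
      then have "ys \<in> set W" using ys(1) unfolding W_def by (simp only: set_filter mem_Collect_eq)
      moreover have "\<not> eval v (X xs q ys)" using eval_X[of v xs q ys] ag False by simp
      ultimately have "\<not> (\<forall>h\<in>set (map (X xs q) W). eval v h)" by auto
      then show ?thesis unfolding \<psi>_def eval_foldr by blast
    qed
  qed
  ultimately show ?thesis by blast
qed

end
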